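(* Let $h(z)=\sum_{j=1}^\infty h_jz^j$ be a fixed function analytic in the unit disc $D$ with $0<|h_j|\le M$ for all $j\ge1$. Let $f(z)=\sum_{j=1}^\infty f_jz^j$ be such that $F_1(z):=\sum_{j=1}^\infty\frac{f_j}{h_j}z^{j-1}$ is bounded and analytic in $D$. Then there exists an integer $n_1$ such that for every $n\ge n_1$, with $N=2n+1$, there exist pairwise distinct numbers $\lambda_1,\dots,\lambda_N$ with $|\lambda_k|=1$ such that \[|H_N^{(1)}(\lambda;z)-f(z)|\le\frac{(5|z|-|z|^2)^{n+1}}{4^{n-1}}\cdot\frac{2M}{3}\cdot\frac{3+|z|}{(1-|z|)^4},\qquad|z|<1,\] where $H_N^{(1)}(\lambda;z)=\sum_{k=1}^Nh(\lambda_kz)$.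
   Context: In the paper the threshold is written $n\ge n_1(-F_1)$, where $n_1(g)$ denotes an integer (depending on $g$) for which the following holds for all $n\ge n_1(g)$: writing $g=\sum(-a_j)z^j$, the roots of $P_n(g;z):=s_n(z)+z^{2n+1}\overline{s}_n(1/z)$ ($s_n$ the $n$-th Taylor polynomial of $\exp\int_0^z g$, $\overline{s}_n$ its coefficient-conjugate) are simple, lie on $|z|=1$, and their reciprocals $\lambda_k$ satisfy $\sum_k\lambda_k^{j+1}=a_j$ for $j<n$ and $|\sum_k\lambda_k^{j+1}-a_j|<r^{n+1}(r-\varepsilon)^{-j}/(2\varepsilon(1-r))$ for $j\ge n$, $0<\varepsilon<r<1$. *)

theory Defs
  imports "HOL-Analysis.Analysis"
begin

definition ser :: "(nat \<Rightarrow> complex) \<Rightarrow> complex \<Rightarrow> complex" where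
  "ser c z = (\<Sum>j. c (Suc j) * z ^ Suc j)"

definition F1fun :: "(nat \<Rightarrow> complex) \<Rightarrow> (nat \<Rightarrow> complex) \<Rightarrow> complex \<Rightarrow> complex" where
  "F1fun fc hc z = (\<Sum>j. (fc (Suc j) / hc (Suc j)) * z ^ j)"

end

theory Submission
  imports Defs "HOL-Complex_Analysis.Complex_Analysis" "HOL-Computational_Algebra.Polynomial_FPS"
begin


lemma cauchy_coeff_integral:
  fixes g :: "complex \<Rightarrow> complex" and r :: real
  assumes holg: "g holomorphic_on ball 0 1" and r: "0 < r" "r < 1"
  shows "((\<lambda>t. g (circlepath 0 r t) * cnj (circlepath 0 r t) ^ k)
           has_integral ((deriv ^^ k) g 0 / fact k * r ^ (2*k))) {0..1}"
proof -
  have "continuous_on (cball 0 r) g"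
    by (rule holomorphic_on_imp_continuous_on, rule holomorphic_on_subset[OF holg]) (use r in auto)
  moreover have "g holomorphic_on ball 0 r"
    by (rule holomorphic_on_subset[OF holg]) (use r in auto)
  ultimately have C: "((\<lambda>u. g u / (u - 0) ^ (Suc k)) has_contour_integral ((2 * pi * \<i>) / (fact k) * (deriv ^^ k) g 0))
           (circlepath 0 r)"
    by (intro Cauchy_has_contour_integral_higher_derivative_circlepath) (use r in auto)
  have C2: "((\<lambda>t. g (circlepath 0 r t) / (circlepath 0 r t) ^ Suc k * (2 * pi * \<i> * r * exp(2 * of_real pi * \<i> * t)))
          has_integral ((2 * pi * \<i>) / (fact k) * (deriv ^^ k) g 0)) {0..1}"
  proof -
    have I1: "((\<lambda>t. g (circlepath 0 r t) / (circlepath 0 r t) ^ Suc k * vector_derivative (circlepath 0 r) (at t within {0..1}))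
          has_integral ((2 * pi * \<i>) / (fact k) * (deriv ^^ k) g 0)) {0..1}"
      using C unfolding has_contour_integral_def by simp
    have V: "vector_derivative (circlepath 0 r) (at t within {0..1}) = 2 * pi * \<i> * r * exp(2 * of_real pi * \<i> * t)"
      if "t \<in> {0..1}" for t
      by (rule vector_derivative_within_closed_interval[OF _ that has_vector_derivative_circlepath]) simp
    show ?thesis using I1 by (rule has_integral_eq[rotated]) (simp add: V)
  qed
  have eq: "g (circlepath 0 r t) * cnj (circlepath 0 r t) ^ k = 
       (r^(2*k) / (2 * pi * \<i>)) * (g (circlepath 0 r t) / (circlepath 0 r t) ^ Suc k * (2 * pi * \<i> * r * exp(2 * of_real pi * \<i> * t)))" for t
  proof -
    let ?e = "exp(2 * of_real pi * \<i> * t)"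
    have ce: "cnj ?e = inverse ?e" by (simp add: exp_cnj exp_minus)
    have ne: "?e \<noteq> 0" by simp
    have cp: "circlepath 0 r t = r * ?e" by (simp add: circlepath)
    have gen: "\<And>e::complex. e \<noteq> 0 \<Longrightarrow> cnj e = inverse e \<Longrightarrow> X * cnj (r * e) ^ k = 
       (r^(2*k) / (2 * pi * \<i>)) * (X / (r * e) ^ Suc k * (2 * pi * \<i> * r * e))" for X
    proof -
      fix e :: complex assume e: "e \<noteq> 0" "cnj e = inverse e"
      have "e * cnj e = 1" using e by simp
      then have ek: "e ^ k * cnj e ^ k = 1" by (metis power_mult_distrib power_one)
      then show "X * cnj (r * e) ^ k = (r^(2*k) / (2 * pi * \<i>)) * (X / (r * e) ^ Suc k * (2 * pi * \<i> * r * e))"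
        using e r ek by (simp add: field_simps power_mult_distrib power_mult power2_eq_square)
    qed
    show ?thesis unfolding cp using gen[OF ne ce] .
  qed
  show ?thesis
    using has_integral_mult_right[OF C2, of "r^(2*k) / (2 * pi * \<i>)"]
    by (subst eq) (simp add: field_simps)
qed

lemma norm_diff_sq_expand:
  fixes a b :: complex
  shows "norm (a - b)^2 = norm a ^2 - 2 * Re (a * cnj b) + Re (b * cnj b)"
  unfolding cmod_power2 by (simp add: power2_eq_square algebra_simps)

lemma cnj_mult_self_aux:
  fixes z c :: complex
  shows "cnj z * (z * c) = of_real (norm z ^ 2) * c"
proof -
  have "cnj z * (z * c) = (z * cnj z) * c" by (simp add: mult_ac)
  also have "z * cnj z = of_real (norm z ^ 2)" by (rule complex_norm_square[symmetric])
  finally show ?thesis .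
qed

lemma parseval_r:
  fixes f :: "complex \<Rightarrow> complex"
  assumes holf: "f holomorphic_on ball 0 1" and bnd: "\<And>z. norm z < 1 \<Longrightarrow> norm (f z) \<le> K"
    and r: "0 < r" "r < 1"
  shows "(\<Sum>k<m. (norm ((deriv ^^ k) f 0 / fact k))^2 * r^(2*k)) \<le> K^2"
proof -
  define h where "h k = (deriv ^^ k) f 0 / fact k" for k
  define Q where "Q u = (\<Sum>k<m. h k * u^k)" for u
  define QF where "QF = (\<Sum>k<m. fps_const (h k) * fps_X^k)"
  define \<gamma> where "\<gamma> = circlepath 0 r"
  define S where "S = (\<Sum>k<m. (norm (h k))^2 * r^(2*k))"
  have QE: "Q has_fps_expansion QF"
    unfolding Q_def QF_def
    by (intro has_fps_expansion_sum has_fps_expansion_cmult_left has_fps_expansion_fps_X_power)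
  have QF_nth: "QF $ k = (if k < m then h k else 0)" for k
    proof -
    have "QF $ k = (\<Sum>j<m. if k = j then h j else 0)"
      unfolding QF_def fps_sum_nth by (intro sum.cong) (auto simp: fps_X_power_nth)
    also have "\<dots> = (if k < m then h k else 0)" by (simp add: sum.delta)
    finally show ?thesis .
  qed
  have Qcoef: "(deriv ^^ k) Q 0 / fact k = (if k < m then h k else 0)" for k
    using fps_nth_fps_expansion[OF QE, of k] QF_nth by simp
  have holQ: "Q holomorphic_on ball 0 1"
    unfolding Q_def by (intro holomorphic_intros)
  have IQ: "((\<lambda>t. g (\<gamma> t) * cnj (Q (\<gamma> t))) has_integral
            (\<Sum>k<m. cnj (h k) * ((deriv ^^ k) g 0 / fact k * r^(2*k)))) {0..1}"
    if holg: "g holomorphic_on ball 0 1" for g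
  proof -
    have "((\<lambda>t. \<Sum>k<m. cnj (h k) * (g (\<gamma> t) * cnj (\<gamma> t) ^ k)) has_integral
            (\<Sum>k<m. cnj (h k) * ((deriv ^^ k) g 0 / fact k * r^(2*k)))) {0..1}"
      unfolding \<gamma>_def
      by (intro has_integral_sum has_integral_mult_right cauchy_coeff_integral holg r) auto
    moreover have "(\<Sum>k<m. cnj (h k) * (g (\<gamma> t) * cnj (\<gamma> t) ^ k)) = g (\<gamma> t) * cnj (Q (\<gamma> t))" for t
      unfolding Q_def by (simp add: sum_distrib_left algebra_simps)
    ultimately show ?thesis by simp
  qed
  have If: "((\<lambda>t. f (\<gamma> t) * cnj (Q (\<gamma> t))) has_integral of_real S) {0..1}"
  proof -
    have "(\<Sum>k<m. cnj (h k) * ((deriv ^^ k) f 0 / fact k * r^(2*k))) = of_real S"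
      unfolding S_def h_def[symmetric] of_real_sum
      by (intro sum.cong refl) (simp only: cnj_mult_self_aux of_real_mult of_real_power)
    then show ?thesis using IQ[OF holf] by simp
  qed
  have IQQ: "((\<lambda>t. Q (\<gamma> t) * cnj (Q (\<gamma> t))) has_integral of_real S) {0..1}"
  proof -
    have "(\<Sum>k<m. cnj (h k) * ((deriv ^^ k) Q 0 / fact k * r^(2*k))) = of_real S"
      unfolding S_def Qcoef of_real_sum
      by (intro sum.cong refl) (simp only: cnj_mult_self_aux of_real_mult of_real_power lessThan_iff if_True)
    then show ?thesis using IQ[OF holQ] by simp
  qed
  have Ireal: "((\<lambda>t. K^2 - 2 * Re (f (\<gamma> t) * cnj (Q (\<gamma> t))) + Re (Q (\<gamma> t) * cnj (Q (\<gamma> t))))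
      has_integral (K^2 - 2 * S + S)) {0..1}"
  proof -
    have c: "((\<lambda>t. K^2) has_integral K^2) {0..1::real}"
      using has_integral_const_real[of "K^2" 0 1] by simp
    have r1: "((\<lambda>t. Re (f (\<gamma> t) * cnj (Q (\<gamma> t)))) has_integral S) {0..1}"
      using has_integral_Re[OF If] by simp
    have r2: "((\<lambda>t. Re (Q (\<gamma> t) * cnj (Q (\<gamma> t)))) has_integral S) {0..1}"
      using has_integral_Re[OF IQQ] by simp
    show ?thesis
      by (intro has_integral_add has_integral_diff c has_integral_mult_right r1 r2)
  qed
  have nonneg: "0 \<le> K^2 - 2 * Re (f (\<gamma> t) * cnj (Q (\<gamma> t))) + Re (Q (\<gamma> t) * cnj (Q (\<gamma> t)))"
    if "t \<in> {0..1}" for t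
  proof -
    have "norm (\<gamma> t) = r" unfolding \<gamma>_def using r by (simp add: circlepath norm_mult)
    then have "norm (f (\<gamma> t)) \<le> K" using bnd r by simp
    moreover have "0 \<le> norm (f (\<gamma> t))" by simp
    ultimately have "norm (f (\<gamma> t))^2 \<le> K^2" by (simp add: power_mono)
    moreover have "0 \<le> norm (f (\<gamma> t) - Q (\<gamma> t))^2" by simp
    ultimately show ?thesis unfolding norm_diff_sq_expand by linarith
  qed
  have "0 \<le> K^2 - 2 * S + S"
    using has_integral_nonneg[OF Ireal] nonneg by blast
  then show ?thesis unfolding S_def h_def by simp
qed

lemma parseval_bound:
  fixes f :: "complex \<Rightarrow> complex"
  assumes holf: "f holomorphic_on ball 0 1" and bnd: "\<And>z. norm z < 1 \<Longrightarrow> norm (f z) \<le> K"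
  shows "(\<Sum>k<m. (norm ((deriv ^^ k) f 0 / fact k))^2) \<le> K^2"
proof -
  let ?S = "\<lambda>r::real. (\<Sum>k<m. (norm ((deriv ^^ k) f 0 / fact k))^2 * r^(2*k))"
  have "(?S \<longlongrightarrow> ?S 1) (at_left 1)"
    by (intro tendsto_intros)
  moreover have "eventually (\<lambda>r. ?S r \<le> K^2) (at_left 1)"
    by (rule eventually_at_leftI[of 0]) (use parseval_r[OF holf bnd] in auto)
  ultimately have "?S 1 \<le> K^2"
    by (rule tendsto_upperbound) simp
  then show ?thesis by simp
qed



lemma prod_roots_dvd:
  fixes p :: "complex poly"
  assumes "finite A" "\<forall>a\<in>A. poly p a = 0"
  shows "(\<Prod>a\<in>A. [:-a, 1:]) dvd p"
  using assms
proof (induction A arbitrary: p rule: finite_induct)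
  case empty then show ?case by simp
next
  case (insert a A)
  then have "[:-a, 1:] dvd p" by (simp add: poly_eq_0_iff_dvd)
  then obtain q where q: "p = [:-a, 1:] * q" by (elim dvdE)
  have "\<forall>b\<in>A. poly q b = 0"
  proof
    fix b assume b: "b \<in> A"
    then have "b \<noteq> a" using insert by auto
    moreover have "poly p b = 0" using insert b by auto
    ultimately show "poly q b = 0" using q by simp
  qed
  then have "(\<Prod>a\<in>A. [:-a, 1:]) dvd q" using insert by blast
  moreover have "(\<Prod>a\<in>insert a A. [:-a, 1:]) = [:-a, 1:] * (\<Prod>a\<in>A. [:-a, 1:])"
    using insert by simp
  ultimately show ?case unfolding q by (metis mult_dvd_mono dvd_refl)
qed

lemma monic_roots_prod:
  fixes p :: "complex poly"
  assumes "finite A" "\<forall>a\<in>A. poly p a = 0" "degree p = card A" "lead_coeff p = 1"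
  shows "p = (\<Prod>a\<in>A. [:-a, 1:])"
proof -
  obtain r where r: "p = (\<Prod>a\<in>A. [:-a, 1:]) * r"
    using prod_roots_dvd[OF assms(1,2)] by (elim dvdE)
  have pnz: "p \<noteq> 0" using assms(4) by auto
  have ne: "(\<Prod>a\<in>A. [:-a, 1:]) \<noteq> (0 :: complex poly)"
    by (simp add: prod_zero_iff[OF assms(1)])
  have dg: "degree (\<Prod>a\<in>A. [:-a, 1:]) = card A"
    by (subst degree_prod_eq_sum_degree) (auto simp: ne)
  have rnz: "r \<noteq> 0" using pnz r by auto
  have "degree p = card A + degree r" using r ne rnz dg by (simp add: degree_mult_eq)
  then have "degree r = 0" using assms(3) by simp
  then obtain c where c: "r = [:c:]" by (metis degree_eq_zeroE)
  have lc: "lead_coeff (\<Prod>a\<in>A. [:-a, 1:]) = (1::complex)"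
    by (simp add: lead_coeff_prod)
  have "lead_coeff p = c" using r c lc by (simp add: lead_coeff_mult)
  then have "c = 1" using assms(4) by simp
  then show ?thesis using r c by simp
qed

lemma geo_aux:
  fixes x :: complex
  shows "(1 - fps_const x * fps_X) * Abs_fps (\<lambda>j. x ^ Suc j) = fps_const x"
proof (rule fps_ext)
  fix n
  have e: "(1 - fps_const x * fps_X) * Abs_fps (\<lambda>j. x ^ Suc j) =
        Abs_fps (\<lambda>j. x ^ Suc j) - fps_const x * (fps_X * Abs_fps (\<lambda>j. x ^ Suc j))"
    by (simp add: left_diff_distrib mult.assoc)
  show "fps_nth ((1 - fps_const x * fps_X) * Abs_fps (\<lambda>j. x ^ Suc j)) n = fps_nth (fps_const x) n"
    unfolding e by (cases n) simp_all
qed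

lemma newton_fps:
  fixes L :: "nat \<Rightarrow> complex" and A :: "nat set"
  assumes "finite A"
  shows "fps_deriv (\<Prod>m\<in>A. (1 - fps_const (L m) * fps_X)) =
         - ((\<Prod>m\<in>A. (1 - fps_const (L m) * fps_X)) * (\<Sum>m\<in>A. Abs_fps (\<lambda>j. L m ^ Suc j)))"
  using assms
proof (induction A rule: finite_induct)
  case empty then show ?case by simp
next
  case (insert a A)
  let ?P = "\<Prod>m\<in>A. (1 - fps_const (L m) * fps_X)"
  let ?S = "\<Sum>m\<in>A. Abs_fps (\<lambda>j. L m ^ Suc j)"
  let ?g = "Abs_fps (\<lambda>j. L a ^ Suc j)"
  have "fps_deriv (\<Prod>m\<in>insert a A. (1 - fps_const (L m) * fps_X)) =
        fps_deriv ((1 - fps_const (L a) * fps_X) * ?P)" using insert by simp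
  also have "\<dots> = - fps_const (L a) * ?P + (1 - fps_const (L a) * fps_X) * fps_deriv ?P"
    by (simp add: fps_deriv_mult)
  also have "- fps_const (L a) * ?P + (1 - fps_const (L a) * fps_X) * fps_deriv ?P
     = - (((1 - fps_const (L a) * fps_X) * ?P) * (?g + ?S))"
  proof -
    have G: "(1 - fps_const (L a) * fps_X) * ?P * ?g = fps_const (L a) * ?P"
    proof -
      have "(1 - fps_const (L a) * fps_X) * ?P * ?g = ((1 - fps_const (L a) * fps_X) * ?g) * ?P"
        by (simp only: ac_simps)
      then show ?thesis by (simp only: geo_aux)
    qed
    have "- (((1 - fps_const (L a) * fps_X) * ?P) * (?g + ?S)) =
          - ((1 - fps_const (L a) * fps_X) * ?P * ?g) - (1 - fps_const (L a) * fps_X) * ?P * ?S"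
      by (simp only: distrib_left minus_add_distrib diff_conv_add_uminus)
    also have "\<dots> = - fps_const (L a) * ?P + (1 - fps_const (L a) * fps_X) * fps_deriv ?P"
      unfolding G insert.IH by (simp only: mult_minus_right mult_minus_left diff_conv_add_uminus mult.assoc)
    finally show ?thesis by (rule sym)
  qed
  also have "\<dots> = - ((\<Prod>m\<in>insert a A. (1 - fps_const (L m) * fps_X)) * (\<Sum>m\<in>insert a A. Abs_fps (\<lambda>j. L m ^ Suc j)))"
    by (subst prod.insert[OF insert.hyps], subst sum.insert[OF insert.hyps]) (rule refl)
  finally show ?case .
qed

lemma recurrence_compare:
  fixes A B C D :: "complex fps"
  assumes dA: "fps_deriv A = - (A * B)" and dC: "fps_deriv C = - (C * D)"
    and A0: "fps_nth A 0 = 1" and AC: "\<And>k. k \<le> n \<Longrightarrow> fps_nth A k = fps_nth C k"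
  shows "i < n \<Longrightarrow> fps_nth B i = fps_nth D i"
proof (induction i rule: less_induct)
  case (less i)
  have "fps_nth (A * B) i = fps_nth (C * D) i"
  proof -
    have "fps_nth (A * B) i = - (fps_nth (fps_deriv A) i)" using dA by simp
    also have "fps_nth (fps_deriv A) i = fps_nth (fps_deriv C) i" using AC less.prems by simp
    also have "- (fps_nth (fps_deriv C) i) = fps_nth (C * D) i" using dC by simp
    finally show ?thesis .
  qed
  moreover have "fps_nth (A * B) i = fps_nth A 0 * fps_nth B i + (\<Sum>j\<in>{1..i}. fps_nth A j * fps_nth B (i - j))"
    by (simp add: fps_mult_nth sum.atLeast_Suc_atMost)
  moreover have "fps_nth (C * D) i = fps_nth C 0 * fps_nth D i + (\<Sum>j\<in>{1..i}. fps_nth C j * fps_nth D (i - j))"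
    by (simp add: fps_mult_nth sum.atLeast_Suc_atMost)
  moreover have "(\<Sum>j\<in>{1..i}. fps_nth A j * fps_nth B (i - j)) = (\<Sum>j\<in>{1..i}. fps_nth C j * fps_nth D (i - j))"
    using less AC by (intro sum.cong refl) auto
  moreover have "fps_nth C 0 = 1" using AC[of 0] A0 by simp
  ultimately show ?case using A0 by simp
qed



lemma cis_sum_cos:
  fixes a b :: real
  shows "cis a + cis b = 2 * cos ((a - b) / 2) * cis ((a + b) / 2)"
proof -
  define s where "s = (a + b) / 2"
  define d where "d = (a - b) / 2"
  have a: "a = s + d" and b: "b = s + - d" unfolding s_def d_def by (simp_all add: field_simps)
  have e: "cis d + cis (- d) = 2 * cos d"
    by (simp add: complex_eq_iff)
  have "cis a + cis b = cis s * (cis d + cis (- d))"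
    unfolding a b cis_mult[symmetric] by (simp only: distrib_left)
  also have "\<dots> = 2 * cos d * cis s" unfolding e by simp
  finally show ?thesis unfolding s_def d_def .
qed

lemma fps_reflect_lin:
  fixes c :: complex
  assumes "c \<noteq> 0"
  shows "fps_of_poly (reflect_poly [:-c, 1:]) = 1 - fps_const c * fps_X"
proof -
  have "reflect_poly [:-c, 1:] = [:1, -c:]"
    using reflect_poly_pCons'[of "[:1:]" "-c"] by (simp add: monom_altdef)
  moreover have "fps_of_poly [:1, -c:] = 1 - fps_const c * fps_X"
  proof (rule fps_ext)
    fix j show "fps_nth (fps_of_poly [:1, -c:]) j = fps_nth (1 - fps_const c * fps_X) j"
      by (cases j) (auto simp: coeff_pCons split: nat.split)
  qed
  ultimately show ?thesis by simp
qed

lemma roots_on_circle: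
  fixes t :: "nat \<Rightarrow> complex" and n :: nat
  assumes t0: "t 0 = 1" and nz: "\<And>w. norm w \<le> 1 \<Longrightarrow> (\<Sum>k\<le>n. t k * w^k) \<noteq> 0"
  shows "\<exists>lam::nat \<Rightarrow> complex. inj_on lam {1..2*n+1} \<and> (\<forall>k\<in>{1..2*n+1}. norm (lam k) = 1) \<and>
          (\<forall>k\<le>n. fps_nth (\<Prod>m\<in>{1..2*n+1}. (1 - fps_const (lam m) * fps_X)) k = t k)"
proof -
  define N where "N = 2*n+1"
  define T where "T w = (\<Sum>k\<le>n. t k * w^k)" for w
  have contT: "continuous_on (cball 0 1) T" unfolding T_def by (intro continuous_intros)
  obtain g where contg: "continuous_on (cball 0 1) g" and Tg: "\<And>z. z \<in> cball 0 1 \<Longrightarrow> T z = exp (g z)"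
    using continuous_logarithm_on_cball[OF contT] nz unfolding T_def by auto
  define \<phi> where "\<phi> \<theta> = Im (g (cis (- \<theta>)))" for \<theta>
  have contphi: "continuous_on UNIV \<phi>"
  proof -
    have "continuous_on UNIV (\<lambda>\<theta>::real. cis (- \<theta>))" by (intro continuous_intros)
    moreover have "(\<lambda>\<theta>::real. cis (- \<theta>)) ` UNIV \<subseteq> cball 0 1" by auto
    ultimately have "continuous_on UNIV (\<lambda>\<theta>. g (cis (- \<theta>)))"
      by (rule continuous_on_compose2[OF contg])
    then show ?thesis unfolding \<phi>_def by (intro continuous_intros)
  qed
  define \<psi> where "\<psi> \<theta> = real N * (\<theta> + pi) / 2 + \<phi> \<theta> - \<phi> (- pi)" for \<theta>
  have contpsi: "continuous_on {-pi..pi} \<psi>"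
    unfolding \<psi>_def by (intro continuous_intros continuous_on_subset[OF contphi]) auto
  have psi0: "\<psi> (- pi) = 0" unfolding \<psi>_def by simp
  have "cis (- pi) = cis pi" by (simp add: complex_eq_iff)
  then have "\<phi> pi = \<phi> (- pi)" unfolding \<phi>_def by simp
  then have psi1: "\<psi> pi = real N * pi" unfolding \<psi>_def by simp
  define y where "y m = pi / 2 + (real m - 1) * pi" for m :: nat
  have "\<forall>m\<in>{1..N}. \<exists>\<theta>. - pi \<le> \<theta> \<and> \<theta> \<le> pi \<and> \<psi> \<theta> = y m"
  proof
    fix m assume m: "m \<in> {1..N}"
    have "0 \<le> y m" unfolding y_def using m by (auto intro!: add_nonneg_nonneg)
    moreover have "y m \<le> real N * pi"
    proof -
      have "real m \<le> real N" using m by simp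
      then have "(real m - 1) * pi \<le> (real N - 1) * pi" by (intro mult_right_mono) auto
      then have "y m \<le> pi/2 + (real N - 1) * pi" unfolding y_def by linarith
      also have "\<dots> \<le> real N * pi" using pi_gt_zero by (simp add: algebra_simps)
      finally show ?thesis .
    qed
    ultimately show "\<exists>\<theta>. - pi \<le> \<theta> \<and> \<theta> \<le> pi \<and> \<psi> \<theta> = y m"
      using IVT'[of \<psi> "- pi" "y m" pi] contpsi psi0 psi1 by auto
  qed
  then obtain \<Theta> where Th: "\<And>m. m \<in> {1..N} \<Longrightarrow> - pi \<le> \<Theta> m \<and> \<Theta> m \<le> pi \<and> \<psi> (\<Theta> m) = y m"
    by metis
  have ypos: "0 < y m" if "m \<in> {1..N}" for m
    unfolding y_def using that by (auto intro!: add_pos_nonneg)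
  have Th_gt: "- pi < \<Theta> m" if "m \<in> {1..N}" for m
  proof -
    have "\<Theta> m \<noteq> - pi" using Th[OF that] psi0 ypos[OF that] by auto
    then show ?thesis using Th[OF that] by auto
  qed
  define lam where "lam m = cis (\<Theta> m)" for m
  have inj: "inj_on lam {1..N}"
  proof (rule inj_onI)
    fix m1 m2 assume m: "m1 \<in> {1..N}" "m2 \<in> {1..N}" and e: "lam m1 = lam m2"
    have "Arg (lam m1) = \<Theta> m1" unfolding lam_def using Th[OF m(1)] Th_gt[OF m(1)] by (intro Arg_cis) auto
    moreover have "Arg (lam m2) = \<Theta> m2" unfolding lam_def using Th[OF m(2)] Th_gt[OF m(2)] by (intro Arg_cis) auto
    ultimately have "\<Theta> m1 = \<Theta> m2" using e by simp
    then have "y m1 = y m2" using Th[OF m(1)] Th[OF m(2)] by simp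
    then show "m1 = m2" unfolding y_def by simp
  qed
  have norm1: "\<forall>k\<in>{1..N}. norm (lam k) = 1" unfolding lam_def by simp
  define \<omega> where "\<omega> = cis (2 * \<phi> (- pi) - real N * pi)"
  define Pp where "Pp = (\<Sum>k\<le>n. monom (t k) (N - k)) + smult \<omega> (\<Sum>k\<le>n. monom (cnj (t k)) k)"
  have polyP: "poly Pp z = (\<Sum>k\<le>n. t k * z^(N-k)) + \<omega> * (\<Sum>k\<le>n. cnj (t k) * z^k)" for z
    unfolding Pp_def by (simp add: poly_sum poly_monom)
  have root: "poly Pp (lam m) = 0" if m: "m \<in> {1..N}" for m
  proof -
    define \<theta> where "\<theta> = \<Theta> m"
    define z where "z = cis \<theta>"
    have z1: "z * cnj z = 1" unfolding z_def by (simp add: cis_cnj cis_mult)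
    have s1: "(\<Sum>k\<le>n. t k * z^(N-k)) = z^N * T (cnj z)"
      unfolding T_def sum_distrib_left
    proof (intro sum.cong refl)
      fix k assume "k \<in> {..n}"
      then have "N = (N - k) + k" unfolding N_def by simp
      then have "z^N = z^(N-k) * z^k" by (metis power_add)
      then have "z^N * cnj z ^ k = z^(N-k) * (z * cnj z)^k" by (simp add: power_mult_distrib)
      then show "t k * z^(N-k) = z^N * (t k * cnj z ^ k)" using z1 by (simp add: algebra_simps)
    qed
    have s2: "(\<Sum>k\<le>n. cnj (t k) * z^k) = cnj (T (cnj z))"
      unfolding T_def cnj_sum by simp
    have cz: "cnj z = cis (- \<theta>)" unfolding z_def by (simp add: cis_cnj)
    define R where "R = exp (Re (g (cis (- \<theta>))))"
    have Tc: "T (cnj z) = of_real R * cis (\<phi> \<theta>)"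
      unfolding cz R_def \<phi>_def using Tg[of "cis (- \<theta>)"] by (simp add: exp_eq_polar)
    have Tc': "cnj (T (cnj z)) = of_real R * cis (- \<phi> \<theta>)"
      unfolding Tc by (simp add: cis_cnj)
    have zN: "z^N = cis (real N * \<theta>)" unfolding z_def by (rule Complex.DeMoivre)
    have "poly (Pp) z = of_real R * (cis (real N * \<theta> + \<phi> \<theta>) + cis ((2 * \<phi> (- pi) - real N * pi) - \<phi> \<theta>))"
    proof -
      define \<alpha> where "\<alpha> = 2 * \<phi> (- pi) - real N * pi"
      have "poly Pp z = cis (real N * \<theta>) * (of_real R * cis (\<phi> \<theta>)) + cis \<alpha> * (of_real R * cis (- \<phi> \<theta>))"
        unfolding polyP s1 s2 zN \<omega>_def \<alpha>_def Tc'[unfolded Tc] Tc by (rule refl)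
      also have "cis (real N * \<theta>) * (of_real R * cis (\<phi> \<theta>)) = of_real R * cis (real N * \<theta> + \<phi> \<theta>)"
        by (metis cis_mult mult.left_commute)
      also have "cis \<alpha> * (of_real R * cis (- \<phi> \<theta>)) = of_real R * cis (\<alpha> + - \<phi> \<theta>)"
        by (metis cis_mult mult.left_commute)
      finally show ?thesis unfolding \<alpha>_def by (simp add: distrib_left)
    qed
    also have "\<dots> = of_real R * (2 * cos (\<psi> \<theta>) * cis ((real N * \<theta> + \<phi> \<theta> + ((2 * \<phi> (- pi) - real N * pi) - \<phi> \<theta>)) / 2))"
    proof -
      have "((real N * \<theta> + \<phi> \<theta>) - ((2 * \<phi> (- pi) - real N * pi) - \<phi> \<theta>)) / 2 = \<psi> \<theta>"
        unfolding \<psi>_def by (simp add: field_simps)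
      then show ?thesis by (simp only: cis_sum_cos)
    qed
    also have "cos (\<psi> \<theta>) = 0"
    proof -
      have "\<psi> \<theta> = pi / 2 + real (m - 1) * pi" unfolding \<theta>_def using Th[OF m] m unfolding y_def by auto
      then show ?thesis by (simp add: cos_add sin_npi)
    qed
    finally show ?thesis unfolding lam_def z_def \<theta>_def by simp
  qed
  have coeffP: "coeff Pp j = (\<Sum>k\<le>n. if N - k = j then t k else 0) + \<omega> * (\<Sum>k\<le>n. if j = k then cnj (t k) else 0)" for j
    unfolding Pp_def by (simp add: coeff_sum coeff_monom)
  have cN: "coeff Pp N = 1"
  proof -
    have "(\<Sum>k\<le>n. if N - k = N then t k else 0) = (\<Sum>k\<le>n. if k = 0 then t k else 0)"
      by (intro sum.cong refl) (auto simp: N_def)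
    also have "\<dots> = 1" using t0 by simp
    finally have a: "(\<Sum>k\<le>n. if N - k = N then t k else 0) = 1" .
    have b: "(\<Sum>k\<le>n. if N = k then cnj (t k) else 0) = 0"
      by (intro sum.neutral) (auto simp: N_def)
    show ?thesis unfolding coeffP a b by simp
  qed
  have cbig: "coeff Pp j = 0" if "j > N" for j
  proof -
    have a: "(\<Sum>k\<le>n. if N - k = j then t k else 0) = 0" by (intro sum.neutral) (use that in auto)
    have b: "(\<Sum>k\<le>n. if j = k then cnj (t k) else 0) = 0" by (intro sum.neutral) (use that in \<open>auto simp: N_def\<close>)
    show ?thesis unfolding coeffP a b by simp
  qed
  have cmid: "coeff Pp (N - k) = t k" if "k \<le> n" for k
  proof -
    have "(\<Sum>j\<le>n. if N - j = N - k then t j else 0) = (\<Sum>j\<le>n. if j = k then t j else 0)"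
      by (intro sum.cong refl) (use that in \<open>auto simp: N_def\<close>)
    also have "\<dots> = t k" using that by simp
    finally have a: "(\<Sum>j\<le>n. if N - j = N - k then t j else 0) = t k" .
    have b: "(\<Sum>j\<le>n. if N - k = j then cnj (t j) else 0) = 0"
      by (intro sum.neutral) (use that in \<open>auto simp: N_def\<close>)
    show ?thesis unfolding coeffP a b by simp
  qed
  have degP: "degree Pp = N"
  proof (rule antisym)
    show "degree Pp \<le> N" by (rule degree_le) (use cbig in auto)
    show "N \<le> degree Pp" by (rule le_degree) (simp add: cN)
  qed
  have cardA: "card (lam ` {1..N}) = N" using card_image[OF inj] by simp
  have "Pp = (\<Prod>a\<in>lam ` {1..N}. [:-a, 1:])"
    by (rule monic_roots_prod) (use root degP cardA cN in auto)
  also have "\<dots> = (\<Prod>m\<in>{1..N}. [:-lam m, 1:])"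
    using prod.reindex[OF inj, of "\<lambda>a. [:-a, 1:]"] by (simp add: o_def)
  finally have Pprod: "Pp = (\<Prod>m\<in>{1..N}. [:-lam m, 1:])" .
  have lnz: "lam m \<noteq> 0" for m unfolding lam_def by simp
  have F: "fps_of_poly (reflect_poly Pp) = (\<Prod>m\<in>{1..N}. (1 - fps_const (lam m) * fps_X))"
    unfolding Pprod reflect_poly_prod fps_of_poly_prod by (intro prod.cong refl fps_reflect_lin lnz)
  have "\<forall>k\<le>n. fps_nth (\<Prod>m\<in>{1..N}. (1 - fps_const (lam m) * fps_X)) k = t k"
  proof (intro allI impI)
    fix k assume k: "k \<le> n"
    have "fps_nth (\<Prod>m\<in>{1..N}. (1 - fps_const (lam m) * fps_X)) k = coeff (reflect_poly Pp) k"
      unfolding F[symmetric] by simp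
    also have "\<dots> = coeff Pp (N - k)" unfolding coeff_reflect_poly degP using k by (simp add: N_def)
    also have "\<dots> = t k" using cmid[OF k] .
    finally show "fps_nth (\<Prod>m\<in>{1..N}. (1 - fps_const (lam m) * fps_X)) k = t k" .
  qed
  then show ?thesis using inj norm1 unfolding N_def by blast
qed



lemma inv_sq_tail:
  assumes "n \<ge> 1"
  shows "(\<Sum>k\<in>{n<..m}. 1 / (real k)^2) \<le> 1 / real n"
proof -
  have "m \<ge> n \<Longrightarrow> (\<Sum>k\<in>{n<..m}. 1 / (real k)^2) \<le> 1 / real n - 1 / real m" for m
  proof (induction m)
    case 0 then show ?case by simp
  next
    case (Suc m)
    show ?case
    proof (cases "m \<ge> n")
      case True
      have m1: "real m \<ge> 1" using True assms by simp
      have "{n<..Suc m} = insert (Suc m) {n<..m}" using True by auto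
      then have "(\<Sum>k\<in>{n<..Suc m}. 1 / (real k)^2) = 1 / (real (Suc m))^2 + (\<Sum>k\<in>{n<..m}. 1 / (real k)^2)"
        by simp
      also have "\<dots> \<le> 1 / (real (Suc m))^2 + (1 / real n - 1 / real m)" using Suc.IH True by simp
      also have "1 / (real (Suc m))^2 \<le> 1 / real m - 1 / real (Suc m)"
      proof -
        have a: "1 / real m - 1 / real (Suc m) = 1 / (real m * real (Suc m))" using m1 by (simp add: field_simps)
        have b: "1 / (real (Suc m))^2 \<le> 1 / (real m * real (Suc m))"
          using m1 by (intro divide_left_mono) (auto simp: power2_eq_square intro!: mult_right_mono)
        show ?thesis unfolding a by (rule b)
      qed
      finally show ?thesis by simp
    next
      case False
      then have "Suc m = n" using Suc.prems by simp
      then show ?thesis by simp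
    qed
  qed
  note A = this
  show ?thesis
  proof (cases "m \<ge> n")
    case True
    have "0 \<le> 1 / real m" by simp
    then show ?thesis using A[OF True] by linarith
  next
    case False
    then have "{n<..m} = {}" by auto
    then show ?thesis by simp
  qed
qed

lemma amgm_aux:
  fixes x y e :: real
  assumes "e > 0"
  shows "2 * x * y \<le> e * x^2 + y^2 / e"
proof -
  have "0 \<le> (e * x - y)^2 / e" using assms by simp
  also have "\<dots> = e * x^2 - 2 * x * y + y^2 / e" using assms by (simp add: power2_eq_square field_simps)
  finally show ?thesis by simp
qed

lemma tail_bound:
  fixes t :: "nat \<Rightarrow> complex" and K \<epsilon> :: real
  assumes Hb: "\<And>m. (\<Sum>k<m. (real (Suc k) * norm (t (Suc k)))^2) \<le> K^2"
    and eps: "\<epsilon> > 0" and n: "n \<ge> 1"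
  shows "(\<Sum>k\<in>{n<..m}. norm (t k)) \<le> \<epsilon> * K^2 / 2 + 1 / (2 * \<epsilon> * real n)"
proof -
  have pt: "norm (t k) \<le> (\<epsilon> * (real k * norm (t k))^2 + 1 / (\<epsilon> * (real k)^2)) / 2" if "k \<ge> 1" for k
  proof -
    let ?x = "real k * norm (t k)" and ?y = "1 / real k"
    have h: "2 * ?x * ?y \<le> \<epsilon> * ?x^2 + ?y^2 / \<epsilon>" by (rule amgm_aux[OF eps])
    have e1: "2 * ?x * ?y = 2 * norm (t k)" using that by simp
    have e2: "?y^2 / \<epsilon> = 1 / (\<epsilon> * (real k)^2)" by (simp add: power2_eq_square field_simps)
    from h have "2 * norm (t k) \<le> \<epsilon> * ?x^2 + 1 / (\<epsilon> * (real k)^2)" unfolding e1 e2 .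
    then show ?thesis by simp
  qed
  have "(\<Sum>k\<in>{n<..m}. norm (t k)) \<le> (\<Sum>k\<in>{n<..m}. (\<epsilon> * (real k * norm (t k))^2 + 1 / (\<epsilon> * (real k)^2)) / 2)"
    by (intro sum_mono pt) (use n in auto)
  also have "\<dots> = \<epsilon> / 2 * (\<Sum>k\<in>{n<..m}. (real k * norm (t k))^2) + 1 / (2 * \<epsilon>) * (\<Sum>k\<in>{n<..m}. 1 / (real k)^2)"
  proof -
    have "(\<Sum>k\<in>{n<..m}. (\<epsilon> * (real k * norm (t k))^2 + 1 / (\<epsilon> * (real k)^2)) / 2)
        = (\<Sum>k\<in>{n<..m}. \<epsilon> / 2 * (real k * norm (t k))^2 + 1 / (2 * \<epsilon>) * (1 / (real k)^2))"
      by (intro sum.cong refl) (simp add: add_divide_distrib)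
    also have "\<dots> = \<epsilon> / 2 * (\<Sum>k\<in>{n<..m}. (real k * norm (t k))^2) + 1 / (2 * \<epsilon>) * (\<Sum>k\<in>{n<..m}. 1 / (real k)^2)"
      by (simp only: sum.distrib sum_distrib_left)
    finally show ?thesis .
  qed
  also have "(\<Sum>k\<in>{n<..m}. (real k * norm (t k))^2) \<le> K^2"
  proof -
    have "(\<Sum>k\<in>{n<..m}. (real k * norm (t k))^2) \<le> (\<Sum>k\<in>{1..m}. (real k * norm (t k))^2)"
      by (intro sum_mono2) (use n in auto)
    also have "(\<Sum>k\<in>{1..m}. (real k * norm (t k))^2) = (\<Sum>k<m. (real (Suc k) * norm (t (Suc k)))^2)"
      using sum.atLeast1_atMost_eq[of "\<lambda>k. (real k * norm (t k))^2" m] by simp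
    also have "\<dots> \<le> K^2" by (rule Hb)
    finally show ?thesis .
  qed
  also have "(\<Sum>k\<in>{n<..m}. 1 / (real k)^2) \<le> 1 / real n" by (rule inv_sq_tail[OF n])
  finally show ?thesis using eps n by (simp add: field_simps)
qed

lemma final_ineq:
  fixes M B r :: real and n :: nat
  assumes M: "M > 0" and B: "B \<ge> 0" and n16: "n \<ge> 16" and nB: "real n \<ge> B" and r: "0 \<le> r" "r < 1"
  shows "M * (real (2*n+1) + B) * r^(n+1) / (1 - r) \<le>
         (5 * r - r^2)^(n+1) / ((4::real) powi (int n - 1)) * (2 * M / 3) * (3 + r) / (1 - r)^4"
proof -
  define t where "t = 1 - r"
  have t: "0 < t" "t \<le> 1" using r unfolding t_def by auto
  define X where "X = (1 + t/4)^(n+1)"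
  define k where "k = n div 3"
  have k5: "k \<ge> 5" unfolding k_def using n16 by simp
  have k3: "3 * k \<le> n + 1" "n \<le> 3 * k + 2" unfolding k_def by auto
  have X1: "X \<ge> (real k * (t/4))^3"
  proof -
    have "(1 + t/4)^(3*k) \<le> X" unfolding X_def using k3 t by (intro power_increasing) auto
    moreover have "(1 + t/4)^(3*k) = ((1 + t/4)^k)^3" by (simp add: power_mult mult.commute)
    moreover have "1 + real k * (t/4) \<le> (1 + t/4)^k" using t by (intro Bernoulli_inequality) simp
    then have "(real k * (t/4))^3 \<le> ((1 + t/4)^k)^3" using t by (intro power_mono) auto
    ultimately show ?thesis by simp
  qed
  have kk: "2 * (real (2*n+1) + B) \<le> (real k)^3"
  proof -
    have "real k ^ 3 \<ge> 25 * real k"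
    proof -
      have "real k \<ge> 5" using k5 by simp
      then have "(real k)^2 \<ge> 5^2" by (intro power_mono) auto
      then have "(real k)^2 \<ge> 25" by simp
      then have "real k * 25 \<le> real k * (real k)^2" by (intro mult_left_mono) auto
      then show ?thesis by (simp add: power3_eq_cube power2_eq_square mult_ac)
    qed
    moreover have "3 * real k \<ge> real n - 2" using k3 by linarith
    moreover have "real n \<ge> 16" using n16 by simp
    ultimately have "6 * real n + 2 \<le> real k ^ 3" by linarith
    moreover have "2 * (real (2*n+1) + B) \<le> 6 * real n + 2" using nB by simp
    ultimately show ?thesis by linarith
  qed
  have key: "(real (2*n+1) + B) * t^3 \<le> 16 * X * ((2/3) * (3 + r))"
  proof -
    have "(real (2*n+1) + B) * t^3 \<le> (real k)^3 / 2 * t^3" using kk t by (intro mult_right_mono) auto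
    also have "\<dots> = 32 * (real k * (t/4))^3"
    proof -
      have "(real k * (t/4))^3 = (real k)^3 * t^3 / 64" by (simp add: power_mult_distrib power_divide)
      then show ?thesis by simp
    qed
    also have "\<dots> \<le> 32 * X" using X1 by simp
    also have "\<dots> \<le> 16 * X * ((2/3) * (3 + r))"
    proof -
      have "X \<ge> 0" unfolding X_def using t by simp
      moreover have "2 \<le> (2/3) * (3 + r)" using r by simp
      ultimately have "X * 2 \<le> X * ((2/3) * (3 + r))" by (rule mult_left_mono[rotated])
      then show ?thesis by simp
    qed
    finally show ?thesis .
  qed
  have p4: "(4::real) powi (int n - 1) = 4^(n-1)"
  proof -
    have e: "int n - 1 = int (n - 1)" using n16 by simp
    show ?thesis unfolding e by (rule power_int_of_nat)
  qed
  have e5: "(5 * r - r^2)^(n+1) = r^(n+1) * 4^(n-1) * (16 * X)"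
  proof -
    have "5 * r - r^2 = r * 4 * (1 + t/4)" unfolding t_def by (simp add: field_simps power2_eq_square)
    then have "(5 * r - r^2)^(n+1) = r^(n+1) * 4^(n+1) * X" unfolding X_def by (simp only: power_mult_distrib)
    moreover have "(4::real)^(n+1) = 4^(n-1) * 16"
    proof -
      have nn: "n + 1 = (n - 1) + 2" using n16 by simp
      have "(4::real)^(n+1) = 4^((n-1)+2)" by (subst nn) (rule refl)
      also have "\<dots> = 4^(n-1) * 16" by (simp add: power_add)
      finally show ?thesis .
    qed
    ultimately show ?thesis by simp
  qed
  have RHS: "(5 * r - r^2)^(n+1) / ((4::real) powi (int n - 1)) * (2 * M / 3) * (3 + r) / (1 - r)^4
        = M * r^(n+1) * (16 * X * ((2/3) * (3 + r))) / t^4"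
  proof -
    have gen: "\<And>a b c d u. c \<noteq> 0 \<Longrightarrow> (a * c * b) / c * (2 * M / 3) * u / d = M * a * (b * ((2/3) * u)) / (d::real)"
      by (simp add: field_simps)
    have "(4::real)^(n-1) \<noteq> 0" by simp
    from gen[OF this, of "r^(n+1)" "16 * X" "3 + r" "(1 - r)^4"] show ?thesis
      unfolding p4 e5 t_def .
  qed
  have LHS: "M * (real (2*n+1) + B) * r^(n+1) / (1 - r) = M * r^(n+1) * ((real (2*n+1) + B) * t^3) / t^4"
  proof -
    have t4: "t^4 = t^3 * t" by (simp add: power3_eq_cube power4_eq_xxxx)
    have "M * r^(n+1) * ((real (2*n+1) + B) * t^3) / t^4 = M * r^(n+1) * (real (2*n+1) + B) / t"
      unfolding t4 using t by (simp add: field_simps)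
    then show ?thesis unfolding t_def by simp
  qed
  show ?thesis unfolding RHS LHS
    using key t M r by (intro divide_right_mono mult_left_mono) auto
qed



theorem corollary2p1:
  fixes hc fc :: "nat \<Rightarrow> complex" and M :: real
  assumes h_coef: "\<And>j. j \<ge> 1 \<Longrightarrow> 0 < norm (hc j) \<and> norm (hc j) \<le> M"
    and h_conv: "\<And>z. norm z < 1 \<Longrightarrow> summable (\<lambda>j. hc (Suc j) * z ^ Suc j)"
    and h_anal: "ser hc holomorphic_on ball 0 1"
    and f_conv: "\<And>z. norm z < 1 \<Longrightarrow> summable (\<lambda>j. fc (Suc j) * z ^ Suc j)"
    and F1_conv: "\<And>z. norm z < 1 \<Longrightarrow> summable (\<lambda>j. (fc (Suc j) / hc (Suc j)) * z ^ j)"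
    and F1_anal: "F1fun fc hc holomorphic_on ball 0 1"
    and F1_bdd: "\<exists>B. \<forall>z. norm z < 1 \<longrightarrow> norm (F1fun fc hc z) \<le> B"
  shows "\<exists>n1::nat. \<forall>n\<ge>n1. \<exists>lam :: nat \<Rightarrow> complex.
           inj_on lam {1..2*n+1} \<and> (\<forall>k\<in>{1..2*n+1}. norm (lam k) = 1) \<and>
           (\<forall>z::complex. norm z < 1 \<longrightarrow>
              norm ((\<Sum>k=1..2*n+1. ser hc (lam k * z)) - ser fc z)
                \<le> (5 * norm z - (norm z)^2) ^ (n+1) / ((4::real) powi (int n - 1))
                   * (2 * M / 3) * (3 + norm z) / (1 - norm z) ^ 4)"
proof -
  obtain B where B: "\<forall>z. norm z < 1 \<longrightarrow> norm (F1fun fc hc z) \<le> B" using F1_bdd by blast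
  define B0 where "B0 = max B 0"
  define F1 where "F1 = F1fun fc hc"
  have B0: "B0 \<ge> 0" unfolding B0_def by simp
  have F1b: "norm (F1 z) \<le> B0" if "norm z < 1" for z
    using B that unfolding F1_def B0_def by force
  have holF1: "F1 holomorphic_on ball 0 1" using F1_anal unfolding F1_def .
  have Mpos: "M > 0" using h_coef[of 1] by linarith
  have hnz: "hc (Suc j) \<noteq> 0" for j using h_coef[of "Suc j"] by auto
  have hM: "norm (hc (Suc j)) \<le> M" for j using h_coef[of "Suc j"] by auto
  define a where "a j = fc (Suc j) / hc (Suc j)" for j
  define Cf where "Cf = Abs_fps a"
  have F1eval: "F1 = eval_fps Cf"
    by (rule ext) (simp add: F1_def F1fun_def eval_fps_def Cf_def a_def)
  have radC: "fps_conv_radius Cf \<ge> 1"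
    unfolding fps_conv_radius_def Cf_def
  proof (rule conv_radius_geI_ex)
    fix r :: real assume r: "0 < r" "ereal r < 1"
    then have "norm (complex_of_real r) < 1" by simp
    then show "\<exists>z. norm z = r \<and> summable (\<lambda>n. fps_nth (Abs_fps a) n * z ^ n)"
      using F1_conv[of "complex_of_real r"] r by (intro exI[of _ "complex_of_real r"]) (auto simp: a_def)
  qed
  have F1exp: "F1 has_fps_expansion Cf"
    unfolding F1eval by (rule eval_fps_has_fps_expansion) (use radC in \<open>auto simp: zero_less_one_ereal intro: less_le_trans[of 0 1]\<close>)
  have abnd: "norm (a j) \<le> B0" for j
  proof -
    have "(\<Sum>k<Suc j. (norm ((deriv ^^ k) F1 0 / fact k))^2) \<le> B0^2"
      by (rule parseval_bound[OF holF1 F1b])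
    moreover have "(deriv ^^ k) F1 0 / fact k = a k" for k
      using fps_nth_fps_expansion[OF F1exp, of k] unfolding Cf_def by simp
    ultimately have "(\<Sum>k<Suc j. (norm (a k))^2) \<le> B0^2" by simp
    moreover have "(norm (a j))^2 \<le> (\<Sum>k<Suc j. (norm (a k))^2)"
      by (rule member_le_sum) auto
    ultimately have "(norm (a j))^2 \<le> B0^2" by linarith
    then show ?thesis using B0 by (rule power2_le_imp_le)
  qed
  have holmF1: "(\<lambda>z. - F1 z) holomorphic_on ball 0 1" using holF1 by (intro holomorphic_intros)
  obtain G0 where G0: "\<And>x. x \<in> ball 0 1 \<Longrightarrow> (G0 has_field_derivative (- F1 x)) (at x within ball 0 1)"
    using holomorphic_convex_primitive'[OF convex_ball open_ball holmF1] by blast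
  define G where "G z = G0 z - G0 0" for z
  have Gd: "(G has_field_derivative (- F1 x)) (at x)" if "x \<in> ball 0 1" for x
  proof -
    have "(G0 has_field_derivative (- F1 x)) (at x)"
      using G0[OF that] at_within_open[OF that open_ball] by simp
    then show ?thesis unfolding G_def by (auto intro!: derivative_eq_intros)
  qed
  have G00: "G 0 = 0" unfolding G_def by simp
  have Gb: "norm (G z) \<le> B0" if "norm z < 1" for z
  proof -
    have "norm (G z - G 0) \<le> B0 * norm (z - 0)"
    proof (rule field_differentiable_bound[OF convex_ball])
      show "(G has_field_derivative (- F1 x)) (at x within ball 0 1)" if "x \<in> ball 0 1" for x
        using Gd[OF that] by (rule has_field_derivative_at_within)
      show "norm (- F1 x) \<le> B0" if "x \<in> ball 0 1" for x using F1b that by simp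
    qed (use that in auto)
    also have "\<dots> \<le> B0" using that B0 by (simp add: mult_left_le)
    finally show ?thesis using G00 by simp
  qed
  define E where "E z = exp (G z)" for z
  have Ed: "(E has_field_derivative (- F1 x * E x)) (at x)" if "x \<in> ball 0 1" for x
    unfolding E_def using DERIV_fun_exp[OF Gd[OF that]] by (simp add: mult.commute)
  have holE: "E holomorphic_on ball 0 1"
    unfolding holomorphic_on_open[OF open_ball] using Ed by blast
  have dE: "deriv E x = - F1 x * E x" if "x \<in> ball 0 1" for x
    using Ed[OF that] by (rule DERIV_imp_deriv)
  have E0: "E 0 = 1" unfolding E_def G00 by simp
  have Elow: "norm (E z) \<ge> exp (- B0)" if "norm z < 1" for z
  proof -
    have "- B0 \<le> Re (G z)" using Gb[OF that] abs_Re_le_cmod[of "G z"] by linarith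
    then show ?thesis unfolding E_def by simp
  qed
  have Eup: "norm (E z) \<le> exp B0" if "norm z < 1" for z
  proof -
    have "Re (G z) \<le> B0" using Gb[OF that] abs_Re_le_cmod[of "G z"] by linarith
    then show ?thesis unfolding E_def by simp
  qed
  define K where "K = (B0 + 1) * exp B0"
  have Kpos: "K > 0" unfolding K_def using B0 by simp
  have holdE: "deriv E holomorphic_on ball 0 1" using holE by (rule holomorphic_deriv) simp
  have dEb: "norm (deriv E z) \<le> K" if "norm z < 1" for z
  proof -
    have "norm (deriv E z) = norm (F1 z) * norm (E z)" using dE[of z] that by (simp add: norm_mult)
    also have "\<dots> \<le> B0 * exp B0" using F1b[OF that] Eup[OF that] B0 by (intro mult_mono) auto
    also have "\<dots> \<le> K" unfolding K_def by (simp add: distrib_right)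
    finally show ?thesis .
  qed
  define tc where "tc k = (deriv ^^ k) E 0 / fact k" for k
  have Hb: "(\<Sum>k<m. (real (Suc k) * norm (tc (Suc k)))^2) \<le> K^2" for m
  proof -
    have "(\<Sum>k<m. (norm ((deriv ^^ k) (deriv E) 0 / fact k))^2) \<le> K^2"
      by (rule parseval_bound[OF holdE dEb])
    moreover have "norm ((deriv ^^ k) (deriv E) 0 / fact k) = real (Suc k) * norm (tc (Suc k))" for k
    proof -
      have "(deriv ^^ k) (deriv E) = (deriv ^^ Suc k) E" by (simp only: funpow_Suc_right o_def)
      moreover have "of_nat (Suc k) * ((deriv ^^ Suc k) E 0 / fact (Suc k)) = (deriv ^^ Suc k) E 0 / (fact k :: complex)"
      proof -
        have fs: "(fact (Suc k) :: complex) = of_nat (Suc k) * fact k" by (rule fact_Suc)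
        have nz: "(of_nat (Suc k) :: complex) \<noteq> 0" by (simp del: of_nat_Suc)
        show ?thesis unfolding fs using nz by (simp add: field_simps del: of_nat_Suc)
      qed
      ultimately have "(deriv ^^ k) (deriv E) 0 / fact k = of_nat (Suc k) * tc (Suc k)"
        unfolding tc_def by simp
      then show ?thesis by (simp only: norm_mult norm_of_nat)
    qed
    ultimately show ?thesis by simp
  qed
  have tc0: "tc 0 = 1" unfolding tc_def using E0 by simp
  have Esums: "(\<lambda>k. tc k * w^k) sums E w" if "norm w < 1" for w
    using holomorphic_power_series[OF holE, of w] that unfolding tc_def by simp
  define c0 where "c0 = K^2 * exp (2 * B0)"
  define n1 where "n1 = 16 + nat \<lceil>B0\<rceil> + nat \<lceil>c0\<rceil> + 1"
  show ?thesis
  proof (intro exI[of _ n1] allI impI)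
    fix n assume nn1: "n1 \<le> n"
    have n16: "n \<ge> 16" using nn1 unfolding n1_def by simp
    have nB: "real n \<ge> B0"
    proof -
      have "nat \<lceil>B0\<rceil> \<le> n" using nn1 unfolding n1_def by linarith
      then have "real (nat \<lceil>B0\<rceil>) \<le> real n" by (simp only: of_nat_le_iff)
      moreover have "B0 \<le> real (nat \<lceil>B0\<rceil>)" by (rule real_nat_ceiling_ge)
      ultimately show ?thesis by linarith
    qed
    have nc: "real n > c0"
    proof -
      have "nat \<lceil>c0\<rceil> < n" using nn1 unfolding n1_def by linarith
      then have "real (nat \<lceil>c0\<rceil>) < real n" by (simp only: of_nat_less_iff)
      moreover have "c0 \<le> real (nat \<lceil>c0\<rceil>)" by (rule real_nat_ceiling_ge)
      ultimately show ?thesis by linarith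
    qed
    have n1': "n \<ge> 1" using n16 by simp
    define \<epsilon> where "\<epsilon> = exp (- B0) / K^2"
    have epos: "\<epsilon> > 0" unfolding \<epsilon>_def using Kpos by simp
    define \<delta> where "\<delta> = \<epsilon> * K^2 / 2 + 1 / (2 * \<epsilon> * real n)"
    have dlt: "\<delta> < exp (- B0)"
    proof -
      have a: "\<epsilon> * K^2 / 2 = exp (- B0) / 2" unfolding \<epsilon>_def using Kpos by simp
      have "K^2 * exp (2 * B0) < real n" using nc unfolding c0_def .
      moreover have "exp (2 * B0) * exp (- B0) * exp (- B0) = 1" by (simp flip: exp_add)
      ultimately have "K^2 < real n * exp (- B0) * exp (- B0)"
      proof -
        assume h1: "K^2 * exp (2 * B0) < real n" and h2: "exp (2 * B0) * exp (- B0) * exp (- B0) = 1"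
        have "K^2 * exp (2 * B0) * (exp (- B0) * exp (- B0)) < real n * (exp (- B0) * exp (- B0))"
          by (rule mult_strict_right_mono[OF h1]) simp
        moreover have "K^2 * exp (2 * B0) * (exp (- B0) * exp (- B0)) = K^2"
          using h2 by (simp only: mult.assoc mult_1_right)
        ultimately show ?thesis by (simp only: mult.assoc)
      qed
      then have "1 < \<epsilon> * real n * exp (- B0)"
        unfolding \<epsilon>_def using Kpos by (simp add: field_simps)
      then have "1 / (2 * \<epsilon> * real n) < exp (- B0) / 2"
        using epos n1' by (simp add: field_simps)
      then show ?thesis unfolding \<delta>_def a by simp
    qed
    have tail: "(\<Sum>k\<in>{n<..m}. norm (tc k)) \<le> \<delta>" for m
      unfolding \<delta>_def by (rule tail_bound[OF Hb epos n1'])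
    define Tn where "Tn w = (\<Sum>k\<le>n. tc k * w^k)" for w
    have close: "norm (E w - Tn w) \<le> \<delta>" if w: "norm w < 1" for w
    proof -
      have lim: "(\<lambda>m. norm ((\<Sum>k<m. tc k * w^k) - Tn w)) \<longlonglongrightarrow> norm (E w - Tn w)"
        using Esums[OF w] unfolding sums_def by (intro tendsto_intros)
      have ev: "eventually (\<lambda>m. norm ((\<Sum>k<m. tc k * w^k) - Tn w) \<le> \<delta>) sequentially"
        unfolding eventually_sequentially
      proof (intro exI[of _ "Suc n"] allI impI)
        fix m assume m: "Suc n \<le> m"
        have split: "{..<m} = {..n} \<union> {n<..<m}" using m by auto
        have "(\<Sum>k<m. tc k * w^k) = Tn w + (\<Sum>k\<in>{n<..<m}. tc k * w^k)"
          unfolding Tn_def split by (subst sum.union_disjoint) auto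
        then have "norm ((\<Sum>k<m. tc k * w^k) - Tn w) = norm (\<Sum>k\<in>{n<..<m}. tc k * w^k)" by simp
        also have "\<dots> \<le> (\<Sum>k\<in>{n<..<m}. norm (tc k * w^k))" by (rule norm_sum)
        also have "\<dots> \<le> (\<Sum>k\<in>{n<..<m}. norm (tc k))"
        proof (intro sum_mono)
          fix k
          have "norm w ^ k \<le> 1" using w by (simp add: power_le_one)
          then show "norm (tc k * w^k) \<le> norm (tc k)"
            by (simp add: norm_mult norm_power mult_left_le)
        qed
        also have "\<dots> \<le> (\<Sum>k\<in>{n<..m}. norm (tc k))" by (intro sum_mono2) auto
        also have "\<dots> \<le> \<delta>" by (rule tail)
        finally show "norm ((\<Sum>k<m. tc k * w^k) - Tn w) \<le> \<delta>" .
      qed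
      show ?thesis using tendsto_upperbound[OF lim ev] by simp
    qed
    have Tlow: "norm (Tn w) \<ge> exp (- B0) - \<delta>" if w: "norm w < 1" for w
    proof -
      have "norm (E w) \<le> norm (Tn w) + norm (E w - Tn w)" by (rule norm_triangle_sub)
      then show ?thesis using Elow[OF w] close[OF w] by linarith
    qed
    have Tnz: "(\<Sum>k\<le>n. tc k * w^k) \<noteq> 0" if w: "norm w \<le> 1" for w
    proof -
      let ?S = "{w. exp (- B0) - \<delta> \<le> norm (Tn w)}"
      have "closed ?S" unfolding Tn_def by (intro closed_Collect_le continuous_intros)
      moreover have "ball 0 1 \<subseteq> ?S" using Tlow by auto
      ultimately have "closure (ball 0 1) \<subseteq> ?S" by (rule closure_minimal[rotated])
      then have "cball 0 1 \<subseteq> ?S" by simp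
      then have "exp (- B0) - \<delta> \<le> norm (Tn w)" using w by auto
      then have "Tn w \<noteq> 0" using dlt by auto
      then show ?thesis unfolding Tn_def .
    qed
    obtain lam where lam_inj: "inj_on lam {1..2*n+1}" and lam_norm: "\<forall>k\<in>{1..2*n+1}. norm (lam k) = 1"
      and lam_coef: "\<forall>k\<le>n. fps_nth (\<Prod>m\<in>{1..2*n+1}. (1 - fps_const (lam m) * fps_X)) k = tc k"
      using roots_on_circle[of tc n, OF tc0 Tnz] by blast
    define A where "A = {1..2*n+1}"
    have finA: "finite A" unfolding A_def by simp
    define Q where "Q = (\<Prod>m\<in>A. (1 - fps_const (lam m) * fps_X))"
    define Pw where "Pw = (\<Sum>m\<in>A. Abs_fps (\<lambda>j. lam m ^ Suc j))"
    define TT where "TT = fps_expansion E 0"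
    have TTn: "fps_nth TT k = tc k" for k unfolding TT_def fps_expansion_def tc_def by simp
    have Eexp: "E has_fps_expansion TT"
      unfolding TT_def by (rule has_fps_expansion_fps_expansion[OF open_ball _ holE]) simp
    have dTT: "fps_deriv TT = - (TT * Cf)"
    proof -
      have 1: "deriv E has_fps_expansion fps_deriv TT" by (rule has_fps_expansion_deriv[OF Eexp])
      have 2: "(\<lambda>z. - (E z * F1 z)) has_fps_expansion - (TT * Cf)"
        by (intro has_fps_expansion_minus has_fps_expansion_mult Eexp F1exp)
      have ev: "eventually (\<lambda>z. deriv E z = - (E z * F1 z)) (nhds 0)"
      proof -
        have "eventually (\<lambda>z. z \<in> ball 0 1) (nhds (0::complex))"
          by (intro eventually_nhds_in_open) auto
        then show ?thesis by eventually_elim (simp add: dE mult.commute)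
      qed
      have 3: "deriv E has_fps_expansion - (TT * Cf)"
        using 2 has_fps_expansion_cong[OF ev refl] by simp
      show ?thesis by (rule fps_expansion_unique_complex[OF 1 3])
    qed
    have dQ: "fps_deriv Q = - (Q * Pw)" unfolding Q_def Pw_def by (rule newton_fps[OF finA])
    have QT: "fps_nth Q k = fps_nth TT k" if "k \<le> n" for k
      using lam_coef that unfolding Q_def A_def TTn by simp
    have Q0: "fps_nth Q 0 = 1" using QT[of 0] TTn[of 0] tc0 by simp
    have psum: "(\<Sum>m\<in>A. lam m ^ Suc i) = a i" if "i < n" for i
    proof -
      have "fps_nth Pw i = fps_nth Cf i"
        by (rule recurrence_compare[OF dQ dTT Q0 QT that])
      then show ?thesis unfolding Pw_def Cf_def by (simp add: fps_sum_nth)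
    qed
    have Nnorm: "norm (\<Sum>m\<in>A. lam m ^ j) \<le> real (2*n+1)" for j
    proof -
      have "norm (\<Sum>m\<in>A. lam m ^ j) \<le> (\<Sum>m\<in>A. norm (lam m ^ j))" by (rule norm_sum)
      also have "\<dots> = (\<Sum>m\<in>A. 1)" using lam_norm unfolding A_def by (intro sum.cong refl) (simp add: norm_power)
      also have "\<dots> = real (2*n+1)" unfolding A_def by simp
      finally show ?thesis .
    qed
    have main: "inj_on lam {1..2*n+1} \<and> (\<forall>k\<in>{1..2*n+1}. norm (lam k) = 1) \<and>
           (\<forall>z::complex. norm z < 1 \<longrightarrow>
              norm ((\<Sum>k=1..2*n+1. ser hc (lam k * z)) - ser fc z)
                \<le> (5 * norm z - (norm z)^2) ^ (n+1) / ((4::real) powi (int n - 1))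
                   * (2 * M / 3) * (3 + norm z) / (1 - norm z) ^ 4)"
    proof (intro conjI allI impI lam_inj lam_norm)
      fix z :: complex assume z: "norm z < 1"
      define r where "r = norm z"
      have r: "0 \<le> r" "r < 1" using z unfolding r_def by auto
      define d where "d j = hc (Suc j) * (\<Sum>m\<in>A. lam m ^ Suc j) - fc (Suc j)" for j
      have sums1: "(\<lambda>j. d j * z ^ Suc j) sums ((\<Sum>k\<in>A. ser hc (lam k * z)) - ser fc z)"
      proof -
        have each: "(\<lambda>j. hc (Suc j) * (lam k * z) ^ Suc j) sums ser hc (lam k * z)" if "k \<in> A" for k
        proof -
          have "norm (lam k * z) < 1" using lam_norm that z unfolding A_def by (simp add: norm_mult)
          then show ?thesis unfolding ser_def by (rule summable_sums[OF h_conv])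
        qed
        have s1: "(\<lambda>j. \<Sum>k\<in>A. hc (Suc j) * (lam k * z) ^ Suc j) sums (\<Sum>k\<in>A. ser hc (lam k * z))"
          by (rule sums_sum) (rule each)
        have s2: "(\<lambda>j. fc (Suc j) * z ^ Suc j) sums ser fc z"
          unfolding ser_def by (rule summable_sums[OF f_conv[OF z]])
        have eq: "(\<Sum>k\<in>A. hc (Suc j) * (lam k * z) ^ Suc j) - fc (Suc j) * z ^ Suc j = d j * z ^ Suc j" for j
        proof -
          have "(\<Sum>k\<in>A. hc (Suc j) * (lam k * z) ^ Suc j) = (\<Sum>k\<in>A. (hc (Suc j) * z ^ Suc j) * lam k ^ Suc j)"
            by (intro sum.cong refl) (simp only: power_mult_distrib mult_ac)
          also have "\<dots> = (hc (Suc j) * z ^ Suc j) * (\<Sum>k\<in>A. lam k ^ Suc j)"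
            by (simp only: sum_distrib_left)
          finally show ?thesis unfolding d_def by (simp add: algebra_simps)
        qed
        show ?thesis using sums_diff[OF s1 s2] unfolding eq .
      qed
      have d0: "d j = 0" if "j < n" for j
        unfolding d_def psum[OF that] a_def using hnz[of j] by simp
      have dB: "norm (d j) \<le> M * (real (2*n+1) + B0)" for j
      proof -
        have fcj: "fc (Suc j) = hc (Suc j) * a j" unfolding a_def using hnz[of j] by simp
        have "norm (d j) \<le> norm (hc (Suc j) * (\<Sum>m\<in>A. lam m ^ Suc j)) + norm (fc (Suc j))"
          unfolding d_def by (rule norm_triangle_ineq4)
        also have "norm (hc (Suc j) * (\<Sum>m\<in>A. lam m ^ Suc j)) \<le> M * real (2*n+1)"
          unfolding norm_mult using hM[of j] Nnorm[of "Suc j"] Mpos by (intro mult_mono) auto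
        also have "norm (fc (Suc j)) \<le> M * B0"
          unfolding fcj norm_mult using hM[of j] abnd[of j] Mpos by (intro mult_mono) auto
        finally show ?thesis by (simp add: distrib_left)
      qed
      define C where "C = M * (real (2*n+1) + B0)"
      have Cnn: "C \<ge> 0" unfolding C_def using Mpos B0 by simp
      have sums2: "(\<lambda>i. d (i + n) * z ^ Suc (i + n)) sums ((\<Sum>k\<in>A. ser hc (lam k * z)) - ser fc z)"
      proof -
        have "(\<Sum>i<n. d i * z ^ Suc i) = 0" using d0 by simp
        then show ?thesis using sums_split_initial_segment[OF sums1, of n] by simp
      qed
      define g where "g i = C * r^(n+1) * r^i" for i
      have gs: "g sums (C * r^(n+1) * (1 / (1 - r)))"
        unfolding g_def by (intro sums_mult geometric_sums) (use r in simp)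
      have fb: "norm (d (i + n) * z ^ Suc (i + n)) \<le> g i" for i
      proof -
        have "norm (z ^ Suc (i + n)) = r^(n+1) * r^i" unfolding r_def by (simp add: norm_power norm_mult power_add mult_ac)
        then have "norm (d (i + n) * z ^ Suc (i + n)) = norm (d (i + n)) * (r^(n+1) * r^i)" by (simp add: norm_mult)
        also have "\<dots> \<le> C * (r^(n+1) * r^i)" unfolding C_def using dB r by (intro mult_right_mono) auto
        finally show ?thesis unfolding g_def by (simp add: mult_ac)
      qed
      have sn: "summable (\<lambda>i. norm (d (i + n) * z ^ Suc (i + n)))"
        by (rule summable_comparison_test[of _ g]) (use fb sums_summable[OF gs] in auto)
      have "norm ((\<Sum>k\<in>A. ser hc (lam k * z)) - ser fc z) = norm (\<Sum>i. d (i + n) * z ^ Suc (i + n))"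
        using sums_unique[OF sums2] by simp
      also have "\<dots> \<le> (\<Sum>i. norm (d (i + n) * z ^ Suc (i + n)))" by (rule summable_norm[OF sn])
      also have "\<dots> \<le> (\<Sum>i. g i)" by (rule suminf_le[OF fb sn sums_summable[OF gs]])
      also have "\<dots> = C * r^(n+1) / (1 - r)" using sums_unique[OF gs] by simp
      also have "\<dots> = M * (real (2*n+1) + B0) * r^(n+1) / (1 - r)" unfolding C_def ..
      also have "\<dots> \<le> (5 * r - r^2)^(n+1) / ((4::real) powi (int n - 1)) * (2 * M / 3) * (3 + r) / (1 - r)^4"
        by (rule final_ineq[OF Mpos B0 n16 nB r])
      finally show "norm ((\<Sum>k=1..2*n+1. ser hc (lam k * z)) - ser fc z)
                \<le> (5 * norm z - (norm z)^2) ^ (n+1) / ((4::real) powi (int n - 1))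
                   * (2 * M / 3) * (3 + norm z) / (1 - norm z) ^ 4"
        unfolding r_def A_def .
    qed
    then show "\<exists>lam :: nat \<Rightarrow> complex. inj_on lam {1..2*n+1} \<and> (\<forall>k\<in>{1..2*n+1}. norm (lam k) = 1) \<and>
           (\<forall>z::complex. norm z < 1 \<longrightarrow>
              norm ((\<Sum>k=1..2*n+1. ser hc (lam k * z)) - ser fc z)
                \<le> (5 * norm z - (norm z)^2) ^ (n+1) / ((4::real) powi (int n - 1))
                   * (2 * M / 3) * (3 + norm z) / (1 - norm z) ^ 4)" by blast
  qed
qed

end
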